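(* Let $\rho:\,]0,+\infty[\,\to\,]0,+\infty[$ be a continuous function (the equation of state $\rho=\rho(P)$, so that $\rho(P)>0$ for $P>0$). Let $R>0$ and $M>0$ satisfy $1-\frac{2M}{R}>0$. Suppose $(m,P)$ is a $C^1$ solution on $]0,R[$ of the Tolman–Oppenheimer–Volkoff system $$\frac{dm}{dr}=4\pi r^2\rho,\qquad \frac{dP}{dr}=-(\rho+P)\,\frac{m+4\pi r^3\rho}{r^2\left(1-\frac{2m}{r}\right)},\qquad \rho=\rho(P(r)),$$ such that for every $r\in\,]0,R[$ the point $(r,m(r),P(r))$ lies in the domain $$\mathsf{D}=\Big\{\,0<r,\ 0<P,\ 0<m+4\pi r^3\rho(P),\ 0<1-\tfrac{2m}{r}\,\Big\},$$ and such that $m(r)\to M$ and $P(r)\to 0$ as $r\to R-0$. Assume moreover that $P(r)$ converges to a finite limit $P_{\mathsf{O}}<\infty$ as $r\to +0$. Then $m(r)\to 0$ as $r\to+0$, and $$m(r)=\int_0^r 4\pi\rho(P(r'))\,(r')^2\,dr'\qquad\text{for all } 0<r<R.$$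
   Context: Geometrical units are used, i.e. the gravitational constant and the speed of light are set equal to $1$. The system is the static spherically symmetric Einstein–Euler (Tolman–Oppenheimer–Volkoff) system for a perfect fluid with pressure $P$, density $\rho=\rho(P)$ and mass function $m(r)$; the data $(m,P)=(M,0)$ at $r=R$ correspond to matching with the exterior Schwarzschild metric of mass $M$ on the sphere $r=R$. *)

theory Defs
  imports "HOL-Analysis.Analysis"
begin

end

theory Submission
  imports Defs
begin

theorem mainTheorem1:
  fixes rho :: "real \<Rightarrow> real" and m P :: "real \<Rightarrow> real" and R M P\<^sub>O :: real
  assumes rho_cont: "continuous_on {0<..} rho"
    and rho_pos: "\<And>p. p > 0 \<Longrightarrow> rho p > 0"
    and R_pos: "R > 0" and M_pos: "M > 0" and RM: "1 - 2 * M / R > 0"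
    and dm: "\<And>r. r \<in> {0<..<R} \<Longrightarrow>
               (m has_real_derivative 4 * pi * r^2 * rho (P r)) (at r)"
    and dP: "\<And>r. r \<in> {0<..<R} \<Longrightarrow>
               (P has_real_derivative
                  - (rho (P r) + P r) * (m r + 4 * pi * r^3 * rho (P r))
                    / (r^2 * (1 - 2 * m r / r))) (at r)"
    and C1: "continuous_on {0<..<R} (deriv m)" "continuous_on {0<..<R} (deriv P)"
    and dom: "\<And>r. r \<in> {0<..<R} \<Longrightarrow>
               0 < P r \<and> 0 < m r + 4 * pi * r^3 * rho (P r) \<and> 0 < 1 - 2 * m r / r"
    and limR_m: "(m \<longlongrightarrow> M) (at_left R)"
    and limR_P: "(P \<longlongrightarrow> 0) (at_left R)"
    and lim0_P: "(P \<longlongrightarrow> P\<^sub>O) (at_right 0)"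
  shows "(m \<longlongrightarrow> 0) (at_right 0) \<and>
         (\<forall>r \<in> {0<..<R}. ((\<lambda>s. 4 * pi * rho (P s) * s^2) has_integral m r) {0..r})"
proof -
  have Pdec: "P r < P s" if "0 < s" "s < r" "r < R" for s r
  proof (rule DERIV_neg_imp_decreasing[OF \<open>s < r\<close>])
    fix x assume x: "s \<le> x" "x \<le> r"
    then have xi: "x \<in> {0<..<R}" using that by auto
    from dom[OF xi] have d: "0 < P x" "0 < m x + 4 * pi * x^3 * rho (P x)" "0 < 1 - 2 * m x / x"
      by auto
    have "0 < rho (P x) + P x" using rho_pos[OF d(1)] d(1) by simp
    moreover have "0 < x^2 * (1 - 2 * m x / x)" using xi d(3) by simp
    ultimately have "- (rho (P x) + P x) * (m x + 4 * pi * x^3 * rho (P x))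
                    / (x^2 * (1 - 2 * m x / x)) < 0"
      using d(2) by (metis divide_neg_pos minus_mult_left mult_pos_pos neg_less_0_iff_less)
    then show "\<exists>y. DERIV P x :> y \<and> y < 0" using dP[OF xi] by blast
  qed
  have POge: "P r \<le> P\<^sub>O" if "0 < r" "r < R" for r
  proof (rule tendsto_lowerbound[OF lim0_P])
    show "\<forall>\<^sub>F x in at_right 0. P r \<le> P x"
      unfolding eventually_at_right_field using that
      by (intro exI[of _ r]) (auto intro: less_imp_le Pdec)
  qed simp
  have POpos: "0 < P\<^sub>O"
    using POge[of "R/2"] dom[of "R/2"] R_pos by force
  have evR: "\<forall>\<^sub>F x in at_right 0. x \<in> {0<..<R}"
    unfolding eventually_at_right_field using R_pos by (intro exI[of _ R]) auto
  have rholim: "((\<lambda>s. rho (P s)) \<longlongrightarrow> rho P\<^sub>O) (at_right 0)"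
  proof (rule continuous_on_tendsto_compose[OF rho_cont lim0_P])
    show "P\<^sub>O \<in> {0<..}" using POpos by simp
    show "\<forall>\<^sub>F x in at_right 0. P x \<in> {0<..}"
      using evR by eventually_elim (use dom in auto)
  qed
  have lo: "((\<lambda>s. - (4 * pi * s^3 * rho (P s))) \<longlongrightarrow> 0) (at_right 0)"
  proof -
    have "((\<lambda>s::real. s) \<longlongrightarrow> 0) (at_right 0)" by (rule tendsto_ident_at)
    then have "((\<lambda>s. - (4 * pi * s^3 * rho (P s))) \<longlongrightarrow> - (4 * pi * 0^3 * rho P\<^sub>O)) (at_right 0)"
      by (intro tendsto_intros rholim)
    then show ?thesis by simp
  qed
  have hi: "((\<lambda>s. s / 2) \<longlongrightarrow> 0) (at_right (0::real))"
  proof -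
    have "((\<lambda>s::real. s / 2) \<longlongrightarrow> 0 / 2) (at_right 0)"
      by (intro tendsto_intros) simp
    then show ?thesis by simp
  qed
  have mlim: "(m \<longlongrightarrow> 0) (at_right 0)"
  proof (rule tendsto_sandwich[OF _ _ lo hi])
    show "\<forall>\<^sub>F n in at_right 0. - (4 * pi * n ^ 3 * rho (P n)) \<le> m n"
      using evR
    proof eventually_elim
      case (elim x)
      then show ?case using dom[OF elim] by linarith
    qed
    show "\<forall>\<^sub>F n in at_right 0. m n \<le> n / 2"
      using evR
    proof eventually_elim
      case (elim x)
      then have "0 < 1 - 2 * m x / x" "x > 0" using dom by auto
      then have "2 * m x / x < 1" by simp
      then have "2 * m x < x" using \<open>x > 0\<close> by (simp add: divide_less_eq)
      then show ?case by simp
    qed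
  qed
  have integ: "((\<lambda>s. 4 * pi * rho (P s) * s^2) has_integral m r) {0..r}" if r: "r \<in> {0<..<R}" for r
  proof -
    define g where "g = (\<lambda>s. if s = 0 then 0 else m s)"
    have gd: "(g has_real_derivative 4 * pi * rho (P x) * x^2) (at x)" if x: "x \<in> {0<..<R}" for x
    proof -
      have "(m has_real_derivative 4 * pi * rho (P x) * x^2) (at x)"
        using dm[OF x] by (simp add: mult_ac)
      moreover have "\<forall>\<^sub>F y in nhds x. m y = g y"
      proof -
        have "x \<noteq> 0" using x by simp
        from t1_space_nhds[OF this] show ?thesis
          by (rule eventually_mono) (simp add: g_def)
      qed
      ultimately show ?thesis
        using DERIV_cong_ev[of x x m g] x by (simp add: g_def)
    qed
    have cont: "continuous_on {0..r} g"
    proof (clarsimp simp: continuous_on_eq_continuous_within)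
      fix x assume x: "0 \<le> x" "x \<le> r"
      show "continuous (at x within {0..r}) g"
      proof (cases "x = 0")
        case True
        have ev: "\<forall>\<^sub>F y in at_right 0. m y = g y"
        proof -
          have "\<forall>\<^sub>F y in at_right (0::real). y > 0" by (rule eventually_at_right_less)
          then show ?thesis by (rule eventually_mono) (simp add: g_def)
        qed
        have "(g \<longlongrightarrow> 0) (at_right 0)"
          by (rule Lim_transform_eventually[OF mlim ev])
        then have "(g \<longlongrightarrow> g 0) (at 0 within {0..r})"
          by (simp add: g_def at_within_Icc_at_right r[simplified] less_imp_le)
        then show ?thesis using True by (simp add: continuous_within)
      next
        case False
        then have "x \<in> {0<..<R}" using x r by auto
        then show ?thesis
          by (rule continuous_at_imp_continuous_at_within[OF DERIV_isCont[OF gd]])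
      qed
    qed
    have "((\<lambda>s. 4 * pi * rho (P s) * s^2) has_integral (g r - g 0)) {0..r}"
    proof (rule fundamental_theorem_of_calculus_interior)
      show "0 \<le> r" using r by simp
      show "continuous_on {0..r} g" by (rule cont)
      fix x assume "x \<in> {0<..<r}"
      then have "x \<in> {0<..<R}" using r by auto
      then show "(g has_vector_derivative 4 * pi * rho (P x) * x^2) (at x)"
        using gd has_real_derivative_iff_has_vector_derivative by blast
    qed
    then show ?thesis using r by (simp add: g_def)
  qed
  show ?thesis using mlim integ by blast
qed

end
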